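(* Let $V=\{1,\dots,N\}$, $V^{\mathrm{abs}}=\{0,N+1\}$, $V^*=V\cup V^{\mathrm{abs}}$, and let $\{\eta(t),t\ge0\}$ be a consistent configuration process on $V^*$ with generator $\mathcal L^{\mathrm{abs}}=\mathcal L+\mathcal H$. For $\eta\in\Omega^*$ and $z\ge0$ let $G(\eta,z):=\mathbb E_\eta[z^{\eta_0(\infty)}]$. Then for all $n$ and all $\eta\in\Omega^*_n$, $$(1-z)\,\partial_zG(\eta,z)+nG(\eta,z)=\sum_{i\in V^*}\eta_iG(\eta-\delta_i,z),$$ and consequently, for $z\in[0,1)$, $$G(\eta,z)=(1-z)^nG(\eta,0)+(1-z)^n\sum_{i\in V^*}\eta_i\int_0^z\frac{G(\eta-\delta_i,u)}{(1-u)^{n+1}}\,du.$$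
   Context: Rates $r(i,j)\ge0$ for $i\in V$, $j\in\{0,N+1\}$. $\mathcal L$ generates a configuration process on $V$ (single-site space $\Lambda\subseteq\mathbb N_0$), acting only on $(\eta_i)_{i\in V}$; $\mathcal Hf(\eta)=\sum_{i\in V,j\in V^{\mathrm{abs}}}r(i,j)\eta_i[f(\eta-\delta_i+\delta_j)-f(\eta)]$. $\Omega^*_n$ is the set of configurations on $V^*$ with $n$ particles, $\Omega^*=\bigcup_n\Omega^*_n$. Consistency: $[\mathcal L^{\mathrm{abs}},\mathcal A]=0$, $\mathcal Af(\eta)=\sum_{x\in V^*}\eta_xf(\eta-\delta_x)$ (terms with $\eta_x=0$ vanish). $\eta_0(\infty)$ is the number of particles eventually absorbed at $0$; expectations at time $\infty$ are limits as $t\to\infty$; $G(\eta,0):=\lim_{z\to0}G(\eta,z)=\mathbb P_\eta(\eta_0(\infty)=0)$. *)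

theory Defs
  imports "HOL-Analysis.Analysis"
begin

type_synonym config = "nat \<Rightarrow> nat"

definition sites_V :: "nat \<Rightarrow> nat set" where
  "sites_V N = {1..N}"

definition sites_abs :: "nat \<Rightarrow> nat set" where
  "sites_abs N = {0, N+1}"

definition sites_star :: "nat \<Rightarrow> nat set" where
  "sites_star N = {0..N+1}"

definition nparticles :: "nat \<Rightarrow> config \<Rightarrow> nat" where
  "nparticles N \<eta> = (\<Sum>x\<in>sites_star N. \<eta> x)"

text \<open>Omega*_n: configurations on V* (single-site space Lambda on V, N_0 on the absorbing
  sites, no particles outside V*) with n particles.\<close>
definition Omega_star :: "nat set \<Rightarrow> nat \<Rightarrow> nat \<Rightarrow> config set" where
  "Omega_star \<Lambda> N n = {\<eta>. (\<forall>x. x \<notin> sites_star N \<longrightarrow> \<eta> x = 0)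
        \<and> (\<forall>i\<in>sites_V N. \<eta> i \<in> \<Lambda>) \<and> nparticles N \<eta> = n}"

definition Omega_star_all :: "nat set \<Rightarrow> nat \<Rightarrow> config set" where
  "Omega_star_all \<Lambda> N = (\<Union>n. Omega_star \<Lambda> N n)"

definition Omega_V :: "nat set \<Rightarrow> nat \<Rightarrow> nat \<Rightarrow> config set" where
  "Omega_V \<Lambda> N m = {\<zeta>. (\<forall>x. x \<notin> sites_V N \<longrightarrow> \<zeta> x = 0)
        \<and> (\<forall>i\<in>sites_V N. \<zeta> i \<in> \<Lambda>) \<and> (\<Sum>i\<in>sites_V N. \<zeta> i) = m}"

definition restrV :: "nat \<Rightarrow> config \<Rightarrow> config" where
  "restrV N \<eta> = (\<lambda>x. if x \<in> sites_V N then \<eta> x else 0)"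

definition embedV :: "nat \<Rightarrow> config \<Rightarrow> config \<Rightarrow> config" where
  "embedV N \<zeta> \<eta> = (\<lambda>x. if x \<in> sites_V N then \<zeta> x else \<eta> x)"

text \<open>Generator L of a (particle-conserving) configuration process on V with transition
  rates c(\<zeta>0,\<zeta>) between configurations on V, acting only on the V-coordinates.\<close>
definition genL :: "nat set \<Rightarrow> nat \<Rightarrow> (config \<Rightarrow> config \<Rightarrow> real)
    \<Rightarrow> (config \<Rightarrow> real) \<Rightarrow> config \<Rightarrow> real" where
  "genL \<Lambda> N c f \<eta> =
     (\<Sum>\<zeta>\<in>Omega_V \<Lambda> N (\<Sum>i\<in>sites_V N. \<eta> i).
        c (restrV N \<eta>) \<zeta> * (f (embedV N \<zeta> \<eta>) - f \<eta>))"

definition removeP :: "nat \<Rightarrow> config \<Rightarrow> config" where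
  "removeP x \<eta> = \<eta>(x := \<eta> x - 1)"

definition moveP :: "nat \<Rightarrow> nat \<Rightarrow> config \<Rightarrow> config" where
  "moveP i j \<eta> = (removeP i \<eta>)(j := removeP i \<eta> j + 1)"

definition genH :: "nat \<Rightarrow> (nat \<Rightarrow> nat \<Rightarrow> real) \<Rightarrow> (config \<Rightarrow> real) \<Rightarrow> config \<Rightarrow> real" where
  "genH N r f \<eta> = (\<Sum>i\<in>sites_V N. \<Sum>j\<in>sites_abs N.
       r i j * real (\<eta> i) * (f (moveP i j \<eta>) - f \<eta>))"

definition genLabs :: "nat set \<Rightarrow> nat \<Rightarrow> (config \<Rightarrow> config \<Rightarrow> real) \<Rightarrow> (nat \<Rightarrow> nat \<Rightarrow> real)
    \<Rightarrow> (config \<Rightarrow> real) \<Rightarrow> config \<Rightarrow> real" where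
  "genLabs \<Lambda> N c r f \<eta> = genL \<Lambda> N c f \<eta> + genH N r f \<eta>"

definition opA :: "nat \<Rightarrow> (config \<Rightarrow> real) \<Rightarrow> config \<Rightarrow> real" where
  "opA N f \<eta> = (\<Sum>x\<in>sites_star N. real (\<eta> x) * f (removeP x \<eta>))"

text \<open>Markov semigroup of the (finite-state, on each Omega*_n) process generated by L^abs:
  E_eta[f(eta(t))] = (exp(t L^abs) f)(eta).\<close>
definition semigroup :: "nat set \<Rightarrow> nat \<Rightarrow> (config \<Rightarrow> config \<Rightarrow> real) \<Rightarrow> (nat \<Rightarrow> nat \<Rightarrow> real)
    \<Rightarrow> real \<Rightarrow> (config \<Rightarrow> real) \<Rightarrow> config \<Rightarrow> real" where
  "semigroup \<Lambda> N c r t f \<eta> = (\<Sum>k. t ^ k / fact k * ((genLabs \<Lambda> N c r ^^ k) f) \<eta>)"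

text \<open>G(eta,z) = E_eta[z^{eta_0(infinity)}] = lim_{t\<rightarrow>\<infinity>} E_eta[z^{eta_0(t)}].\<close>
definition genfun :: "nat set \<Rightarrow> nat \<Rightarrow> (config \<Rightarrow> config \<Rightarrow> real) \<Rightarrow> (nat \<Rightarrow> nat \<Rightarrow> real)
    \<Rightarrow> config \<Rightarrow> real \<Rightarrow> real" where
  "genfun \<Lambda> N c r \<eta> z = Lim at_top (\<lambda>t. semigroup \<Lambda> N c r t (\<lambda>\<xi>. z ^ \<xi> 0) \<eta>)"

end

theory Submission imports Defs begin

lemma sites_star_split: "sites_star N = insert 0 (insert (N+1) (sites_V N))"
  unfolding sites_star_def sites_V_def by auto

lemma nparticles_split: "nparticles N \<xi> = \<xi> 0 + \<xi> (N+1) + (\<Sum>i\<in>sites_V N. \<xi> i)"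
  unfolding nparticles_def sites_star_split by (simp add: sites_V_def)

lemma sum_upd_nat: "finite A \<Longrightarrow> x \<in> A \<Longrightarrow> sum (f(x:=v)) A + f x = sum f A + (v::nat)"
proof -
  assume a: "finite A" "x \<in> A"
  have "sum (f(x:=v)) A = v + sum (f(x:=v)) (A - {x})" using sum.remove[OF a, of "f(x:=v)"] by simp
  also have "sum (f(x:=v)) (A - {x}) = sum f (A - {x})" by (rule sum.cong) auto
  finally show ?thesis using sum.remove[OF a, of f] by simp
qed

locale absproc =
  fixes \<Lambda> :: "nat set" and N :: nat and c :: "config \<Rightarrow> config \<Rightarrow> real" and r :: "nat \<Rightarrow> nat \<Rightarrow> real"
  assumes Lambda_down: "\<forall>a\<in>\<Lambda>. \<forall>b\<le>a. b \<in> \<Lambda>"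
    and c_nonneg: "\<forall>\<zeta>0 \<zeta>. c \<zeta>0 \<zeta> \<ge> 0"
    and r_nonneg: "\<forall>i\<in>sites_V N. \<forall>j\<in>sites_abs N. r i j \<ge> 0"
begin

abbreviation SS where "SS m \<equiv> Omega_star \<Lambda> N m"
abbreviation Q where "Q \<equiv> genLabs \<Lambda> N c r"

lemma SS_finite: "finite (SS m)"
proof -
  have "SS m \<subseteq> (\<lambda>g x. if x \<in> sites_star N then g x else 0) ` (sites_star N \<rightarrow>\<^sub>E {0..m})"
  proof
    fix \<xi> assume h: "\<xi> \<in> SS m"
    have le: "\<xi> x \<le> m" if "x \<in> sites_star N" for x
    proof -
      have "\<xi> x \<le> nparticles N \<xi>" unfolding nparticles_def
        by (rule member_le_sum) (use that in \<open>auto simp: sites_star_def\<close>)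
      thus ?thesis using h by (simp add: Omega_star_def)
    qed
    show "\<xi> \<in> (\<lambda>g x. if x \<in> sites_star N then g x else 0) ` (sites_star N \<rightarrow>\<^sub>E {0..m})"
    proof
      show "\<xi> = (\<lambda>x. if x \<in> sites_star N then restrict \<xi> (sites_star N) x else 0)"
        using h by (auto simp: Omega_star_def)
      show "restrict \<xi> (sites_star N) \<in> sites_star N \<rightarrow>\<^sub>E {0..m}" using le by auto
    qed
  qed
  moreover have "finite (sites_star N \<rightarrow>\<^sub>E {0..m})"
    by (rule finite_PiE) (auto simp: sites_star_def)
  ultimately show ?thesis by (meson finite_imageI finite_subset)
qed

lemma SS_le: "\<xi> \<in> SS m \<Longrightarrow> \<xi> 0 \<le> m"
  by (simp add: Omega_star_def nparticles_split)

lemma embed_in: "\<xi> \<in> SS m \<Longrightarrow> \<zeta> \<in> Omega_V \<Lambda> N (\<Sum>i\<in>sites_V N. \<xi> i) \<Longrightarrow> embedV N \<zeta> \<xi> \<in> SS m"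
proof -
  assume h: "\<xi> \<in> SS m" "\<zeta> \<in> Omega_V \<Lambda> N (\<Sum>i\<in>sites_V N. \<xi> i)"
  have n0: "0 \<notin> sites_V N" "N+1 \<notin> sites_V N" by (auto simp: sites_V_def)
  have "(\<Sum>i\<in>sites_V N. embedV N \<zeta> \<xi> i) = (\<Sum>i\<in>sites_V N. \<zeta> i)"
    by (rule sum.cong) (auto simp: embedV_def)
  then show ?thesis using h n0
    by (auto simp: Omega_star_def Omega_V_def nparticles_split embedV_def sites_star_split)
qed

lemma remove_in: "\<xi> \<in> SS m \<Longrightarrow> x \<in> sites_star N \<Longrightarrow> \<xi> x > 0 \<Longrightarrow> removeP x \<xi> \<in> SS (m - 1)"
proof -
  assume h: "\<xi> \<in> SS m" "x \<in> sites_star N" "\<xi> x > 0"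
  have fin: "finite (sites_star N)" by (simp add: sites_star_def)
  have "nparticles N (removeP x \<xi>) + \<xi> x = nparticles N \<xi> + (\<xi> x - 1)"
    unfolding nparticles_def removeP_def by (rule sum_upd_nat[OF fin h(2)])
  then have "nparticles N (removeP x \<xi>) = m - 1" using h by (simp add: Omega_star_def)
  moreover have "\<forall>i\<in>sites_V N. removeP x \<xi> i \<in> \<Lambda>"
    using h Lambda_down by (auto simp: Omega_star_def removeP_def)
  moreover have "\<forall>y. y \<notin> sites_star N \<longrightarrow> removeP x \<xi> y = 0"
    using h by (auto simp: Omega_star_def removeP_def)
  ultimately show ?thesis by (simp add: Omega_star_def)
qed

lemma move_in: "\<xi> \<in> SS m \<Longrightarrow> i \<in> sites_V N \<Longrightarrow> j \<in> sites_abs N \<Longrightarrow> \<xi> i > 0 \<Longrightarrow> moveP i j \<xi> \<in> SS m"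
proof -
  assume h: "\<xi> \<in> SS m" "i \<in> sites_V N" "j \<in> sites_abs N" "\<xi> i > 0"
  have fin: "finite (sites_star N)" by (simp add: sites_star_def)
  have ij: "i \<noteq> j" "i \<in> sites_star N" "j \<in> sites_star N" "j \<notin> sites_V N" using h(2,3)
    by (auto simp: sites_V_def sites_abs_def sites_star_def)
  have r1: "removeP i \<xi> \<in> SS (m-1)" using remove_in[OF h(1) ij(2) h(4)] .
  have "\<xi> i \<le> nparticles N \<xi>" unfolding nparticles_def
    by (rule member_le_sum) (use ij fin in auto)
  then have m1: "m \<ge> 1" using h by (simp add: Omega_star_def)
  have "nparticles N (moveP i j \<xi>) + removeP i \<xi> j = nparticles N (removeP i \<xi>) + (removeP i \<xi> j + 1)"
    unfolding nparticles_def moveP_def by (rule sum_upd_nat[OF fin ij(3)])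
  then have "nparticles N (moveP i j \<xi>) = m" using r1 h m1 by (simp add: Omega_star_def)
  moreover have "\<forall>k\<in>sites_V N. moveP i j \<xi> k \<in> \<Lambda>"
    using r1 ij by (auto simp: Omega_star_def moveP_def)
  moreover have "\<forall>y. y \<notin> sites_star N \<longrightarrow> moveP i j \<xi> y = 0"
    using r1 ij by (auto simp: Omega_star_def moveP_def)
  ultimately show ?thesis by (simp add: Omega_star_def)
qed


lemma Q_lin: "Q (\<lambda>\<zeta>. a * f \<zeta> + b * g \<zeta>) \<xi> = a * Q f \<xi> + b * Q g \<xi>"
proof -
  have 1: "genL \<Lambda> N c (\<lambda>\<zeta>. a * f \<zeta> + b * g \<zeta>) \<xi> = a * genL \<Lambda> N c f \<xi> + b * genL \<Lambda> N c g \<xi>"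
    unfolding genL_def sum_distrib_left sum.distrib[symmetric]
    by (rule sum.cong) (simp_all add: algebra_simps)
  have 2: "genH N r (\<lambda>\<zeta>. a * f \<zeta> + b * g \<zeta>) \<xi> = a * genH N r f \<xi> + b * genH N r g \<xi>"
    unfolding genH_def sum_distrib_left sum.distrib[symmetric]
    by (intro sum.cong refl) (simp_all add: algebra_simps)
  show ?thesis unfolding genLabs_def 1 2 by (simp add: algebra_simps)
qed

lemma Q_const: "Q (\<lambda>\<zeta>. a) \<xi> = 0"
  unfolding genLabs_def genL_def genH_def by simp

lemma Q_local: "\<xi> \<in> SS m \<Longrightarrow> (\<And>\<zeta>. \<zeta> \<in> SS m \<Longrightarrow> f \<zeta> = g \<zeta>) \<Longrightarrow> Q f \<xi> = Q g \<xi>"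
proof -
  assume h: "\<xi> \<in> SS m" and fg: "\<And>\<zeta>. \<zeta> \<in> SS m \<Longrightarrow> f \<zeta> = g \<zeta>"
  have 1: "(\<Sum>\<zeta>\<in>Omega_V \<Lambda> N (sum \<xi> (sites_V N)). c (restrV N \<xi>) \<zeta> * (f (embedV N \<zeta> \<xi>) - f \<xi>))
      = (\<Sum>\<zeta>\<in>Omega_V \<Lambda> N (sum \<xi> (sites_V N)). c (restrV N \<xi>) \<zeta> * (g (embedV N \<zeta> \<xi>) - g \<xi>))"
    by (rule sum.cong) (auto simp: fg[OF embed_in[OF h]] fg[OF h])
  have 2: "(\<Sum>i\<in>sites_V N. \<Sum>j\<in>sites_abs N. r i j * real (\<xi> i) * (f (moveP i j \<xi>) - f \<xi>))
      = (\<Sum>i\<in>sites_V N. \<Sum>j\<in>sites_abs N. r i j * real (\<xi> i) * (g (moveP i j \<xi>) - g \<xi>))"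
  proof (intro sum.cong refl)
    fix i j assume ij: "i \<in> sites_V N" "j \<in> sites_abs N"
    show "r i j * real (\<xi> i) * (f (moveP i j \<xi>) - f \<xi>) = r i j * real (\<xi> i) * (g (moveP i j \<xi>) - g \<xi>)"
    proof (cases "\<xi> i = 0")
      case False thus ?thesis using fg[OF move_in[OF h ij]] fg[OF h] by simp
    qed simp
  qed
  show "Q f \<xi> = Q g \<xi>"
    unfolding genLabs_def genL_def genH_def using 1 2 by simp
qed

definition rate :: "config \<Rightarrow> real" where
  "rate \<xi> = (\<Sum>\<zeta>\<in>Omega_V \<Lambda> N (\<Sum>i\<in>sites_V N. \<xi> i). c (restrV N \<xi>) \<zeta>)
     + (\<Sum>i\<in>sites_V N. \<Sum>j\<in>sites_abs N. r i j * real (\<xi> i))"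

definition K :: "nat \<Rightarrow> real" where "K m = (\<Sum>\<xi>\<in>SS m. rate \<xi>)"

definition B :: "nat \<Rightarrow> (config \<Rightarrow> real) \<Rightarrow> config \<Rightarrow> real" where
  "B m f \<xi> = Q f \<xi> + K m * f \<xi>"

lemma rate_nonneg: "rate \<xi> \<ge> 0"
  unfolding rate_def using c_nonneg r_nonneg
  by (intro add_nonneg_nonneg sum_nonneg mult_nonneg_nonneg) auto

lemma rate_le_K: "\<xi> \<in> SS m \<Longrightarrow> rate \<xi> \<le> K m"
  unfolding K_def by (rule member_le_sum) (auto simp: rate_nonneg SS_finite)

lemma K_nonneg: "K m \<ge> 0"
  unfolding K_def by (simp add: rate_nonneg sum_nonneg)

lemma Q_decomp: "Q f \<xi> = (\<Sum>\<zeta>\<in>Omega_V \<Lambda> N (\<Sum>i\<in>sites_V N. \<xi> i). c (restrV N \<xi>) \<zeta> * f (embedV N \<zeta> \<xi>))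
     + (\<Sum>i\<in>sites_V N. \<Sum>j\<in>sites_abs N. r i j * real (\<xi> i) * f (moveP i j \<xi>)) - rate \<xi> * f \<xi>"
  unfolding genLabs_def genL_def genH_def rate_def right_diff_distrib sum_subtractf distrib_right sum_distrib_right
  by simp

lemma B_pos: "\<xi> \<in> SS m \<Longrightarrow> (\<And>\<zeta>. \<zeta> \<in> SS m \<Longrightarrow> f \<zeta> \<ge> 0) \<Longrightarrow> B m f \<xi> \<ge> 0"
proof -
  assume h: "\<xi> \<in> SS m" and f: "\<And>\<zeta>. \<zeta> \<in> SS m \<Longrightarrow> f \<zeta> \<ge> 0"
  have 1: "(\<Sum>\<zeta>\<in>Omega_V \<Lambda> N (\<Sum>i\<in>sites_V N. \<xi> i). c (restrV N \<xi>) \<zeta> * f (embedV N \<zeta> \<xi>)) \<ge> 0"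
    using c_nonneg f[OF embed_in[OF h]] by (intro sum_nonneg mult_nonneg_nonneg) auto
  have 2: "(\<Sum>i\<in>sites_V N. \<Sum>j\<in>sites_abs N. r i j * real (\<xi> i) * f (moveP i j \<xi>)) \<ge> 0"
  proof (intro sum_nonneg)
    fix i j assume ij: "i \<in> sites_V N" "j \<in> sites_abs N"
    show "r i j * real (\<xi> i) * f (moveP i j \<xi>) \<ge> 0"
    proof (cases "\<xi> i = 0")
      case False thus ?thesis using f[OF move_in[OF h ij]] r_nonneg ij by simp
    qed simp
  qed
  have "(K m - rate \<xi>) * f \<xi> \<ge> 0" using rate_le_K[OF h] f[OF h] by simp
  thus ?thesis using 1 2 unfolding B_def Q_decomp by (simp add: algebra_simps)
qed


lemma Qpow_lin: "(Q ^^ k) (\<lambda>\<zeta>. a * f \<zeta> + b * g \<zeta>) = (\<lambda>\<zeta>. a * (Q ^^ k) f \<zeta> + b * (Q ^^ k) g \<zeta>)"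
  by (induction k) (auto simp: Q_lin)

lemma Qpow_const0: "(Q ^^ k) (\<lambda>\<zeta>. 0) = (\<lambda>\<zeta>. 0)"
proof (induction k)
  case (Suc k)
  have "(Q ^^ Suc k) (\<lambda>\<zeta>. 0) = Q ((Q ^^ k) (\<lambda>\<zeta>. 0))" by simp
  also have "\<dots> = Q (\<lambda>\<zeta>. 0)" by (simp only: Suc)
  also have "\<dots> = (\<lambda>\<zeta>. 0)" by (rule ext) (rule Q_const)
  finally show ?case .
qed simp

lemma Qpow_sum: "finite F \<Longrightarrow> (Q ^^ k) (\<lambda>\<zeta>. \<Sum>i\<in>F. a i * f i \<zeta>) = (\<lambda>\<zeta>. \<Sum>i\<in>F. a i * (Q ^^ k) (f i) \<zeta>)"
proof (induction F rule: finite_induct)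
  case empty thus ?case by (simp add: Qpow_const0)
next
  case (insert x F)
  have "(Q ^^ k) (\<lambda>\<zeta>. \<Sum>i\<in>insert x F. a i * f i \<zeta>) = (Q ^^ k) (\<lambda>\<zeta>. a x * f x \<zeta> + 1 * (\<Sum>i\<in>F. a i * f i \<zeta>))"
    using insert by simp
  also have "\<dots> = (\<lambda>\<zeta>. a x * (Q ^^ k) (f x) \<zeta> + 1 * (Q ^^ k) (\<lambda>\<zeta>. \<Sum>i\<in>F. a i * f i \<zeta>) \<zeta>)"
    by (rule Qpow_lin)
  finally show ?case using insert by simp
qed

lemma Qpow_local: "\<xi> \<in> SS m \<Longrightarrow> (\<And>\<zeta>. \<zeta> \<in> SS m \<Longrightarrow> f \<zeta> = g \<zeta>) \<Longrightarrow> (Q ^^ k) f \<xi> = (Q ^^ k) g \<xi>"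
proof (induction k arbitrary: \<xi>)
  case (Suc k)
  have "Q ((Q^^k) f) \<xi> = Q ((Q^^k) g) \<xi>"
    by (rule Q_local[OF Suc.prems(1)], rule Suc.IH) (use Suc.prems in auto)
  thus ?case by simp
qed simp

lemma B_lin: "B m (\<lambda>\<zeta>. a * f \<zeta> + b * g \<zeta>) \<xi> = a * B m f \<xi> + b * B m g \<xi>"
  unfolding B_def Q_lin by (simp add: algebra_simps)

lemma Bpow_lin: "(B m ^^ k) (\<lambda>\<zeta>. a * f \<zeta> + b * g \<zeta>) = (\<lambda>\<zeta>. a * (B m ^^ k) f \<zeta> + b * (B m ^^ k) g \<zeta>)"
  by (induction k) (auto simp: B_lin)

lemma B_const: "B m (\<lambda>\<zeta>. a) \<xi> = K m * a"
  unfolding B_def by (simp only: Q_const)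

lemma Bpow_const: "(B m ^^ k) (\<lambda>\<zeta>. a) = (\<lambda>\<zeta>. K m ^ k * a)"
proof (induction k)
  case (Suc k)
  have "(B m ^^ Suc k) (\<lambda>\<zeta>. a) = B m ((B m ^^ k) (\<lambda>\<zeta>. a))" by simp
  also have "\<dots> = B m (\<lambda>\<zeta>. K m ^ k * a)" by (simp only: Suc)
  also have "\<dots> = (\<lambda>\<zeta>. K m ^ Suc k * a)" by (rule ext) (simp add: B_const)
  finally show ?case .
qed simp

lemma B_local: "\<xi> \<in> SS m \<Longrightarrow> (\<And>\<zeta>. \<zeta> \<in> SS m \<Longrightarrow> f \<zeta> = g \<zeta>) \<Longrightarrow> B m f \<xi> = B m g \<xi>"
proof -
  assume a: "\<xi> \<in> SS m" "\<And>\<zeta>. \<zeta> \<in> SS m \<Longrightarrow> f \<zeta> = g \<zeta>"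
  have "Q f \<xi> = Q g \<xi>" by (rule Q_local[OF a])
  thus ?thesis unfolding B_def using a by simp
qed

lemma Bpow_local: "\<xi> \<in> SS m \<Longrightarrow> (\<And>\<zeta>. \<zeta> \<in> SS m \<Longrightarrow> f \<zeta> = g \<zeta>) \<Longrightarrow> (B m ^^ k) f \<xi> = (B m ^^ k) g \<xi>"
proof (induction k arbitrary: \<xi>)
  case (Suc k)
  have "B m ((B m^^k) f) \<xi> = B m ((B m^^k) g) \<xi>"
    by (rule B_local[OF Suc.prems(1)], rule Suc.IH) (use Suc.prems in auto)
  thus ?case by simp
qed simp

lemma Bpow_pos: "\<xi> \<in> SS m \<Longrightarrow> (\<And>\<zeta>. \<zeta> \<in> SS m \<Longrightarrow> f \<zeta> \<ge> 0) \<Longrightarrow> (B m ^^ k) f \<xi> \<ge> 0"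
proof (induction k arbitrary: \<xi>)
  case (Suc k)
  have "B m ((B m^^k) f) \<xi> \<ge> 0"
    by (rule B_pos[OF Suc.prems(1)], rule Suc.IH) (use Suc.prems in auto)
  thus ?case by simp
qed simp

definition fnorm :: "nat \<Rightarrow> (config \<Rightarrow> real) \<Rightarrow> real" where
  "fnorm m f = (\<Sum>\<zeta>\<in>SS m. \<bar>f \<zeta>\<bar>)"

lemma fnorm_ge: "\<zeta> \<in> SS m \<Longrightarrow> \<bar>f \<zeta>\<bar> \<le> fnorm m f"
  unfolding fnorm_def by (rule member_le_sum) (auto simp: SS_finite)

lemma Bpow_bound: "\<xi> \<in> SS m \<Longrightarrow> \<bar>(B m ^^ k) f \<xi>\<bar> \<le> K m ^ k * fnorm m f"
proof -
  assume h: "\<xi> \<in> SS m"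
  let ?M = "fnorm m f"
  have "(B m ^^ k) (\<lambda>\<zeta>. ?M * 1 + (-1) * f \<zeta>) \<xi> \<ge> 0"
    apply (rule Bpow_pos[OF h])
    subgoal for \<zeta> using fnorm_ge[of \<zeta> m f] by (simp add: abs_le_iff)
    done
  moreover have "(B m ^^ k) (\<lambda>\<zeta>. ?M * 1 + 1 * f \<zeta>) \<xi> \<ge> 0"
    apply (rule Bpow_pos[OF h])
    subgoal for \<zeta> using fnorm_ge[of \<zeta> m f] by (simp add: abs_le_iff)
    done
  ultimately show ?thesis
    using Bpow_lin[of k m ?M "\<lambda>_. 1" "-1" f] Bpow_lin[of k m ?M "\<lambda>_. 1" 1 f] Bpow_const[of k m 1]
    by (auto simp: abs_le_iff algebra_simps)
qed

lemma binom_step: "(\<Sum>j\<le>k. of_nat (k choose j) * x^(k-j) * v (Suc j)) + x * (\<Sum>j\<le>k. of_nat (k choose j) * x^(k-j) * v j)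
   = (\<Sum>j\<le>Suc k. of_nat (Suc k choose j) * x^(Suc k - j) * (v j::real))"
proof -
  have A: "x * (\<Sum>j\<le>k. of_nat (k choose j) * x^(k-j) * v j) = (\<Sum>j\<le>Suc k. of_nat (k choose j) * x^(Suc k-j) * v j)"
    unfolding sum_distrib_left by (simp add: Suc_diff_le algebra_simps)
  also have "\<dots> = x ^ Suc k * v 0 + (\<Sum>i\<le>k. of_nat (k choose Suc i) * x^(k-i) * v (Suc i))"
    unfolding sum.atMost_Suc_shift by simp
  finally have A': "x * (\<Sum>j\<le>k. of_nat (k choose j) * x^(k-j) * v j) = \<dots>" .
  have "(\<Sum>j\<le>Suc k. of_nat (Suc k choose j) * x^(Suc k - j) * (v j::real))
      = x ^ Suc k * v 0 + (\<Sum>i\<le>k. (of_nat (k choose i) * x^(k-i) * v (Suc i) + of_nat (k choose Suc i) * x^(k-i) * v (Suc i)))"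
    unfolding sum.atMost_Suc_shift by (simp add: algebra_simps)
  thus ?thesis unfolding A' sum.distrib by simp
qed

lemma Qpow_binom: "(Q ^^ k) f \<xi> = (\<Sum>j\<le>k. of_nat (k choose j) * (- K m)^(k-j) * (B m ^^ j) f \<xi>)"
proof (induction k arbitrary: \<xi>)
  case 0 thus ?case by simp
next
  case (Suc k)
  have QB: "Q g \<xi> = B m g \<xi> - K m * g \<xi>" for g \<xi> unfolding B_def by simp
  have IH: "(Q ^^ k) f = (\<lambda>\<xi>. \<Sum>j\<le>k. of_nat (k choose j) * (- K m)^(k-j) * (B m ^^ j) f \<xi>)"
    using Suc by auto
  have Bsum: "B m (\<lambda>\<zeta>. \<Sum>j\<in>F. a j * g j \<zeta>) \<xi> = (\<Sum>j\<in>F. a j * B m (g j) \<xi>)" if "finite F" for F a g \<xi>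
    using that
  proof (induction F rule: finite_induct)
    case empty thus ?case using B_const[of m 0] by simp
  next
    case (insert x F)
    have "B m (\<lambda>\<zeta>. \<Sum>j\<in>insert x F. a j * g j \<zeta>) \<xi> = B m (\<lambda>\<zeta>. a x * g x \<zeta> + 1 * (\<Sum>j\<in>F. a j * g j \<zeta>)) \<xi>"
      using insert by simp
    also have "\<dots> = a x * B m (g x) \<xi> + 1 * B m (\<lambda>\<zeta>. \<Sum>j\<in>F. a j * g j \<zeta>) \<xi>" by (rule B_lin)
    finally show ?case using insert by simp
  qed
  have "(Q ^^ Suc k) f \<xi> = B m ((Q ^^ k) f) \<xi> - K m * (Q ^^ k) f \<xi>" by (simp add: QB)
  also have "\<dots> = (\<Sum>j\<le>k. of_nat (k choose j) * (- K m)^(k-j) * (B m ^^ Suc j) f \<xi>)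
      + (- K m) * (\<Sum>j\<le>k. of_nat (k choose j) * (- K m)^(k-j) * (B m ^^ j) f \<xi>)"
    unfolding IH by (subst Bsum) (auto simp: mult.assoc)
  also have "\<dots> = (\<Sum>j\<le>Suc k. of_nat (Suc k choose j) * (- K m)^(Suc k-j) * (B m ^^ j) f \<xi>)"
    by (rule binom_step[where v="\<lambda>j. (B m ^^ j) f \<xi>"])
  finally show ?case .
qed


definition E :: "nat \<Rightarrow> real \<Rightarrow> (config \<Rightarrow> real) \<Rightarrow> config \<Rightarrow> real" where
  "E m t f \<xi> = (\<Sum>j. t^j / fact j * (B m ^^ j) f \<xi>)"

lemma E_abs_summable: "\<xi> \<in> SS m \<Longrightarrow> summable (\<lambda>j. norm (t^j / fact j * (B m ^^ j) f \<xi>))"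
proof -
  assume h: "\<xi> \<in> SS m"
  have s: "summable (\<lambda>j. fnorm m f * (inverse (fact j) * (K m * \<bar>t\<bar>)^j))"
    by (intro summable_mult summable_exp)
  show ?thesis
  proof (rule summable_comparison_test[OF _ s], intro exI allI impI)
    fix j :: nat
    have "norm (norm (t^j / fact j * (B m ^^ j) f \<xi>)) = \<bar>t\<bar>^j / fact j * \<bar>(B m ^^ j) f \<xi>\<bar>"
      by (simp add: abs_mult power_abs)
    also have "\<dots> \<le> \<bar>t\<bar>^j / fact j * (K m ^ j * fnorm m f)"
      by (intro mult_left_mono Bpow_bound[OF h]) auto
    also have "\<dots> = fnorm m f * (inverse (fact j) * (K m * \<bar>t\<bar>)^j)"
      by (simp add: power_mult_distrib divide_inverse mult_ac)
    finally show "norm (norm (t^j / fact j * (B m ^^ j) f \<xi>)) \<le> fnorm m f * (inverse (fact j) * (K m * \<bar>t\<bar>)^j)" .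
  qed
qed

lemma E_summable: "\<xi> \<in> SS m \<Longrightarrow> summable (\<lambda>j. t^j / fact j * (B m ^^ j) f \<xi>)"
  by (rule summable_norm_cancel[OF E_abs_summable])

lemma SG_sums: "\<xi> \<in> SS m \<Longrightarrow> (\<lambda>k. t^k / fact k * (Q ^^ k) f \<xi>) sums (E m t f \<xi> * exp (- K m * t))"
proof -
  assume h: "\<xi> \<in> SS m"
  define a where "a j = t^j / fact j * (B m ^^ j) f \<xi>" for j
  define b where "b l = (- K m * t)^l /\<^sub>R fact l" for l
  have sa: "summable (\<lambda>j. norm (a j))" unfolding a_def by (rule E_abs_summable[OF h])
  have sb: "summable (\<lambda>j. norm (b j))" unfolding b_def by (rule summable_norm_exp)
  have eb: "(\<Sum>l. b l) = exp (- K m * t)" unfolding b_def using exp_converges sums_unique by metis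
  have ea: "(\<Sum>l. a l) = E m t f \<xi>" unfolding a_def E_def ..
  have trm: "(\<Sum>i\<le>k. a i * b (k - i)) = t^k / fact k * (Q ^^ k) f \<xi>" for k
  proof -
    have "t^k / fact k * (Q ^^ k) f \<xi> = (\<Sum>i\<le>k. t^k / fact k * (of_nat (k choose i) * (- K m)^(k-i) * (B m ^^ i) f \<xi>))"
      unfolding Qpow_binom[of k f \<xi> m] sum_distrib_left ..
    also have "\<dots> = (\<Sum>i\<le>k. a i * b (k - i))"
    proof (rule sum.cong[OF refl])
      fix i assume "i \<in> {..k}"
      then have ik: "i \<le> k" by simp
      have tk: "t^k = t^i * t^(k-i)" using ik by (metis le_add_diff_inverse power_add)
      show "t^k / fact k * (of_nat (k choose i) * (- K m)^(k-i) * (B m ^^ i) f \<xi>) = a i * b (k - i)"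
      proof -
        have kt: "(- (t * K m)) ^ (k - i) = t ^ (k - i) * (- K m) ^ (k - i)"
          by (metis mult.commute mult_minus_right power_mult_distrib)
        show ?thesis
        unfolding a_def b_def tk using ik
        by (simp add: binomial_fact kt field_simps)
      qed
    qed
    finally show ?thesis ..
  qed
  show ?thesis using Cauchy_product_sums[OF sa sb] unfolding trm ea eb .
qed

lemma SG_eq: assumes "\<xi> \<in> SS m" shows "semigroup \<Lambda> N c r t f \<xi> = E m t f \<xi> * exp (- K m * t)"
  unfolding semigroup_def by (rule sums_unique[OF SG_sums[OF assms], symmetric])

lemma SG_summable: assumes "\<xi> \<in> SS m" shows "summable (\<lambda>k. t^k / fact k * (Q ^^ k) f \<xi>)"
  by (rule sums_summable[OF SG_sums[OF assms]])

lemma SG_local: assumes "\<xi> \<in> SS m" "\<And>\<zeta>. \<zeta> \<in> SS m \<Longrightarrow> f \<zeta> = g \<zeta>"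
  shows "semigroup \<Lambda> N c r t f \<xi> = semigroup \<Lambda> N c r t g \<xi>"
proof -
  have "(Q ^^ k) f \<xi> = (Q ^^ k) g \<xi>" for k by (rule Qpow_local[OF assms])
  thus ?thesis unfolding semigroup_def by simp
qed

lemma SG_sum: "\<xi> \<in> SS m \<Longrightarrow> finite F \<Longrightarrow>
   semigroup \<Lambda> N c r t (\<lambda>\<zeta>. \<Sum>i\<in>F. a i * f i \<zeta>) \<xi> = (\<Sum>i\<in>F. a i * semigroup \<Lambda> N c r t (f i) \<xi>)"
proof -
  assume h: "\<xi> \<in> SS m" "finite F"
  have "semigroup \<Lambda> N c r t (\<lambda>\<zeta>. \<Sum>i\<in>F. a i * f i \<zeta>) \<xi> = (\<Sum>k. \<Sum>i\<in>F. a i * (t^k / fact k * (Q ^^ k) (f i) \<xi>))"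
    unfolding semigroup_def Qpow_sum[OF h(2)] by (simp add: sum_distrib_left algebra_simps)
  also have "\<dots> = (\<Sum>i\<in>F. \<Sum>k. a i * (t^k / fact k * (Q ^^ k) (f i) \<xi>))"
    by (rule suminf_sum) (intro summable_mult SG_summable[OF h(1)])
  also have "\<dots> = (\<Sum>i\<in>F. a i * semigroup \<Lambda> N c r t (f i) \<xi>)"
    unfolding semigroup_def by (intro sum.cong refl suminf_mult SG_summable[OF h(1)])
  finally show ?thesis .
qed

lemma SG_one: "semigroup \<Lambda> N c r t (\<lambda>\<zeta>. 1) \<xi> = 1"
proof -
  have Q1: "Q (\<lambda>\<zeta>. 1) = (\<lambda>\<zeta>. 0)" by (rule ext) (rule Q_const)
  have "(\<lambda>k. t^k / fact k * (Q ^^ k) (\<lambda>\<zeta>. 1) \<xi>) = (\<lambda>k. if k = 0 then 1 else 0)"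
  proof
    fix k show "t^k / fact k * (Q ^^ k) (\<lambda>\<zeta>. 1) \<xi> = (if k = 0 then 1 else 0)"
    proof (cases k)
      case (Suc j)
      have "(Q ^^ Suc j) (\<lambda>\<zeta>. 1) = (Q ^^ j) (Q (\<lambda>\<zeta>. 1))" by (simp only: funpow_Suc_right comp_def)
      thus ?thesis using Suc Q1 Qpow_const0 by simp
    qed simp
  qed
  moreover have "(\<lambda>k::nat. if k = 0 then 1 else (0::real)) sums 1"
    using sums_single[of 0 "\<lambda>_. 1::real"] by simp
  ultimately show ?thesis unfolding semigroup_def using sums_unique by metis
qed

lemma E_nonneg: "\<xi> \<in> SS m \<Longrightarrow> t \<ge> 0 \<Longrightarrow> (\<And>\<zeta>. \<zeta> \<in> SS m \<Longrightarrow> f \<zeta> \<ge> 0) \<Longrightarrow> E m t f \<xi> \<ge> 0"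
  unfolding E_def by (intro suminf_nonneg E_summable mult_nonneg_nonneg Bpow_pos) auto

lemma SG_nonneg: "\<xi> \<in> SS m \<Longrightarrow> t \<ge> 0 \<Longrightarrow> (\<And>\<zeta>. \<zeta> \<in> SS m \<Longrightarrow> f \<zeta> \<ge> 0) \<Longrightarrow> semigroup \<Lambda> N c r t f \<xi> \<ge> 0"
  by (simp add: SG_eq E_nonneg)

lemma E_lin: "\<xi> \<in> SS m \<Longrightarrow> E m t (\<lambda>\<zeta>. a * f \<zeta> + b * g \<zeta>) \<xi> = a * E m t f \<xi> + b * E m t g \<xi>"
proof -
  assume h: "\<xi> \<in> SS m"
  have "E m t (\<lambda>\<zeta>. a * f \<zeta> + b * g \<zeta>) \<xi> = (\<Sum>j. a * (t^j / fact j * (B m ^^ j) f \<xi>) + b * (t^j / fact j * (B m ^^ j) g \<xi>))"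
    unfolding E_def Bpow_lin by (simp add: algebra_simps)
  also have "\<dots> = (\<Sum>j. a * (t^j / fact j * (B m ^^ j) f \<xi>)) + (\<Sum>j. b * (t^j / fact j * (B m ^^ j) g \<xi>))"
    by (intro suminf_add[symmetric] summable_mult E_summable[OF h])
  also have "\<dots> = a * E m t f \<xi> + b * E m t g \<xi>"
    unfolding E_def by (simp only: suminf_mult[OF E_summable[OF h]])
  finally show ?thesis .
qed

lemma E_deriv: "\<xi> \<in> SS m \<Longrightarrow> ((\<lambda>t. E m t g \<xi>) has_real_derivative E m t (B m g) \<xi>) (at t)"
proof -
  assume h: "\<xi> \<in> SS m"
  define cc where "cc j = (B m ^^ j) g \<xi> / fact j" for j
  have E1: "E m s g \<xi> = (\<Sum>j. cc j * s^j)" for s unfolding E_def cc_def by (simp add: field_simps)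
  have dc: "diffs cc j = (B m ^^ j) (B m g) \<xi> / fact j" for j
  proof -
    have "(B m ^^ Suc j) g = (B m ^^ j) (B m g)" by (simp only: funpow_Suc_right comp_def)
    have fs: "of_nat (Suc j) * (X / fact (Suc j)) = (X / fact j :: real)" for X
      by (simp add: divide_simps del: of_nat_Suc)
    show ?thesis unfolding diffs_def cc_def \<open>(B m ^^ Suc j) g = (B m ^^ j) (B m g)\<close> fs ..
  qed
  have E2: "E m s (B m g) \<xi> = (\<Sum>j. diffs cc j * s^j)" for s unfolding E_def dc by (simp add: field_simps)
  have sK: "summable (\<lambda>j. cc j * (\<bar>t\<bar> + 1)^j)"
    using E_summable[OF h, of "\<bar>t\<bar> + 1" g] unfolding cc_def by (simp add: field_simps)
  have "((\<lambda>s. \<Sum>j. cc j * s^j) has_real_derivative (\<Sum>j. diffs cc j * t^j)) (at t)"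
    by (rule termdiffs_strong[OF sK]) simp
  thus ?thesis unfolding E1 E2 .
qed

lemma SG_mono: "\<xi> \<in> SS m \<Longrightarrow> (\<And>\<zeta>. \<zeta> \<in> SS m \<Longrightarrow> Q g \<zeta> \<ge> 0) \<Longrightarrow> 0 \<le> s \<Longrightarrow> s \<le> t \<Longrightarrow>
   semigroup \<Lambda> N c r s g \<xi> \<le> semigroup \<Lambda> N c r t g \<xi>"
proof -
  assume h: "\<xi> \<in> SS m" and Qg: "\<And>\<zeta>. \<zeta> \<in> SS m \<Longrightarrow> Q g \<zeta> \<ge> 0" and st: "0 \<le> s" "s \<le> t"
  have "(\<lambda>u. E m u g \<xi> * exp (- K m * u)) s \<le> (\<lambda>u. E m u g \<xi> * exp (- K m * u)) t"
  proof (rule DERIV_nonneg_imp_nondecreasing[OF st(2)])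
    fix x assume x: "s \<le> x" "x \<le> t"
    have d: "((\<lambda>u. E m u g \<xi> * exp (- K m * u)) has_real_derivative
        E m x (B m g) \<xi> * exp (- K m * x) + exp (- K m * x) * (- K m) * E m x g \<xi>) (at x)"
      by (rule DERIV_mult[OF E_deriv[OF h] DERIV_fun_exp[OF DERIV_cmult_Id[of "- K m"]]])
    have "E m x (B m g) \<xi> * exp (- K m * x) + exp (- K m * x) * (- K m) * E m x g \<xi>
        = E m x (\<lambda>\<zeta>. 1 * B m g \<zeta> + (- K m) * g \<zeta>) \<xi> * exp (- K m * x)"
      unfolding E_lin[OF h] by (simp add: algebra_simps)
    moreover have "E m x (\<lambda>\<zeta>. 1 * B m g \<zeta> + (- K m) * g \<zeta>) \<xi> \<ge> 0"
      by (rule E_nonneg[OF h]) (use x st Qg in \<open>auto simp: B_def\<close>)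
    ultimately show "\<exists>y. ((\<lambda>u. E m u g \<xi> * exp (- K m * u)) has_real_derivative y) (at x) \<and> 0 \<le> y"
      using d by (intro exI[of _ "E m x (B m g) \<xi> * exp (- K m * x) + exp (- K m * x) * (- K m) * E m x g \<xi>"]) simp
  qed
  thus ?thesis by (simp add: SG_eq[OF h])
qed


lemma SG_lin: assumes h: "\<xi> \<in> SS m"
  shows "semigroup \<Lambda> N c r t (\<lambda>\<zeta>. a * f \<zeta> + b * g \<zeta>) \<xi> = a * semigroup \<Lambda> N c r t f \<xi> + b * semigroup \<Lambda> N c r t g \<xi>"
  by (simp add: SG_eq[OF h] E_lin[OF h] algebra_simps)

definition gk :: "nat \<Rightarrow> config \<Rightarrow> real" where "gk k \<zeta> = (if k \<le> \<zeta> 0 then 1 else 0)"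
definition hk :: "nat \<Rightarrow> config \<Rightarrow> real" where "hk k \<zeta> = (if \<zeta> 0 = k then 1 else 0)"

lemma embed0: "embedV N \<zeta>' \<zeta> 0 = \<zeta> 0"
  by (simp add: embedV_def sites_V_def)

lemma move0: "i \<in> sites_V N \<Longrightarrow> moveP i j \<zeta> 0 \<ge> \<zeta> 0"
  by (auto simp: moveP_def removeP_def sites_V_def)

lemma Q_gk_nonneg: "Q (gk k) \<zeta> \<ge> 0"
proof -
  have 1: "genL \<Lambda> N c (gk k) \<zeta> = 0" unfolding genL_def by (simp add: gk_def embed0)
  have 2: "genH N r (gk k) \<zeta> \<ge> 0" unfolding genH_def
  proof (intro sum_nonneg)
    fix i j assume ij: "i \<in> sites_V N" "j \<in> sites_abs N"
    have "gk k (moveP i j \<zeta>) - gk k \<zeta> \<ge> 0" using move0[OF ij(1), where j=j and \<zeta>=\<zeta>] by (auto simp: gk_def)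
    thus "r i j * real (\<zeta> i) * (gk k (moveP i j \<zeta>) - gk k \<zeta>) \<ge> 0" using r_nonneg ij by simp
  qed
  show ?thesis unfolding genLabs_def using 1 2 by simp
qed

lemma mono_conv:
  fixes f :: "real \<Rightarrow> real"
  assumes mono: "\<And>s t. 0 \<le> s \<Longrightarrow> s \<le> t \<Longrightarrow> f s \<le> f t" and bd: "\<And>t. 0 \<le> t \<Longrightarrow> f t \<le> M"
  shows "\<exists>L. (f \<longlongrightarrow> L) at_top"
proof
  have bdd: "bdd_above (f ` {0..})" using bd by (auto intro!: bdd_aboveI[of _ M])
  show "(f \<longlongrightarrow> Sup (f ` {0..})) at_top"
  proof (rule increasing_tendsto)
    show "\<forall>\<^sub>F n in at_top. f n \<le> Sup (f ` {0..})"
      using eventually_ge_at_top[of 0] by eventually_elim (use bdd in \<open>auto intro: cSUP_upper\<close>)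
    fix x assume "x < Sup (f ` {0..})"
    then obtain t0 where t0: "t0 \<in> {0..}" "x < f t0" using less_cSUP_iff[OF _ bdd] by force
    show "\<forall>\<^sub>F n in at_top. x < f n"
      using eventually_ge_at_top[of t0] by eventually_elim (use t0 mono in \<open>force\<close>)
  qed
qed

lemma conv_gk: assumes h: "\<xi> \<in> SS m" shows "\<exists>L. ((\<lambda>t. semigroup \<Lambda> N c r t (gk k) \<xi>) \<longlongrightarrow> L) at_top"
proof (rule mono_conv)
  show "semigroup \<Lambda> N c r s (gk k) \<xi> \<le> semigroup \<Lambda> N c r t (gk k) \<xi>" if "0 \<le> s" "s \<le> t" for s t
    by (rule SG_mono[OF h _ that]) (rule Q_gk_nonneg)
  show "semigroup \<Lambda> N c r t (gk k) \<xi> \<le> 1" if "0 \<le> t" for t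
  proof -
    have "semigroup \<Lambda> N c r t (\<lambda>\<zeta>. 1 * 1 + (-1) * gk k \<zeta>) \<xi> \<ge> 0"
      by (rule SG_nonneg[OF h that]) (simp add: gk_def)
    thus ?thesis using SG_lin[OF h, of t 1 "\<lambda>_. 1" "-1" "gk k"] SG_one by simp
  qed
qed

definition Lh :: "config \<Rightarrow> nat \<Rightarrow> real" where
  "Lh \<xi> k = Lim at_top (\<lambda>t. semigroup \<Lambda> N c r t (hk k) \<xi>)"

lemma conv_hk: assumes h: "\<xi> \<in> SS m" shows "((\<lambda>t. semigroup \<Lambda> N c r t (hk k) \<xi>) \<longlongrightarrow> Lh \<xi> k) at_top"
proof -
  obtain L1 where L1: "((\<lambda>t. semigroup \<Lambda> N c r t (gk k) \<xi>) \<longlongrightarrow> L1) at_top" using conv_gk[OF h] by blast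
  obtain L2 where L2: "((\<lambda>t. semigroup \<Lambda> N c r t (gk (Suc k)) \<xi>) \<longlongrightarrow> L2) at_top" using conv_gk[OF h] by blast
  have hk_eq: "hk k = (\<lambda>\<zeta>. 1 * gk k \<zeta> + (-1) * gk (Suc k) \<zeta>)" by (auto simp: hk_def gk_def)
  have "((\<lambda>t. semigroup \<Lambda> N c r t (hk k) \<xi>) \<longlongrightarrow> L1 - L2) at_top"
    unfolding hk_eq SG_lin[OF h] using tendsto_diff[OF L1 L2] by simp
  thus ?thesis unfolding Lh_def using tendsto_Lim by (metis trivial_limit_at_top_linorder)
qed

lemma conv_phi: assumes h: "\<xi> \<in> SS m"
  shows "((\<lambda>t. semigroup \<Lambda> N c r t (\<lambda>\<zeta>. \<phi> (\<zeta> 0)) \<xi>) \<longlongrightarrow> (\<Sum>k\<le>m. \<phi> k * Lh \<xi> k)) at_top"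
proof -
  have eq: "semigroup \<Lambda> N c r t (\<lambda>\<zeta>. \<phi> (\<zeta> 0)) \<xi> = (\<Sum>k\<le>m. \<phi> k * semigroup \<Lambda> N c r t (hk k) \<xi>)" for t
  proof -
    have "semigroup \<Lambda> N c r t (\<lambda>\<zeta>. \<phi> (\<zeta> 0)) \<xi> = semigroup \<Lambda> N c r t (\<lambda>\<zeta>. \<Sum>k\<le>m. \<phi> k * hk k \<zeta>) \<xi>"
    proof (rule SG_local[OF h])
      fix \<zeta> assume "\<zeta> \<in> SS m"
      then have "\<zeta> 0 \<le> m" by (rule SS_le)
      have "(\<Sum>k\<le>m. \<phi> k * hk k \<zeta>) = (\<Sum>k\<le>m. if k = \<zeta> 0 then \<phi> k else 0)"
        by (rule sum.cong) (auto simp: hk_def)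
      also have "\<dots> = \<phi> (\<zeta> 0)" using \<open>\<zeta> 0 \<le> m\<close> by (subst sum.delta) auto
      finally show "\<phi> (\<zeta> 0) = (\<Sum>k\<le>m. \<phi> k * hk k \<zeta>)" ..
    qed
    also have "\<dots> = (\<Sum>k\<le>m. \<phi> k * semigroup \<Lambda> N c r t (hk k) \<xi>)" by (rule SG_sum[OF h]) simp
    finally show ?thesis .
  qed
  show ?thesis unfolding eq by (intro tendsto_sum tendsto_mult tendsto_const conv_hk[OF h])
qed

lemma genfun_lim: assumes h: "\<xi> \<in> SS m"
  shows "((\<lambda>t. semigroup \<Lambda> N c r t (\<lambda>\<zeta>. z ^ \<zeta> 0) \<xi>) \<longlongrightarrow> genfun \<Lambda> N c r \<xi> z) at_top"
    and "genfun \<Lambda> N c r \<xi> z = (\<Sum>k\<le>m. z ^ k * Lh \<xi> k)"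
proof -
  have l: "((\<lambda>t. semigroup \<Lambda> N c r t (\<lambda>\<zeta>. z ^ \<zeta> 0) \<xi>) \<longlongrightarrow> (\<Sum>k\<le>m. z ^ k * Lh \<xi> k)) at_top"
    by (rule conv_phi[OF h])
  show eq: "genfun \<Lambda> N c r \<xi> z = (\<Sum>k\<le>m. z ^ k * Lh \<xi> k)"
    unfolding genfun_def by (rule tendsto_Lim[OF _ l]) simp
  show "((\<lambda>t. semigroup \<Lambda> N c r t (\<lambda>\<zeta>. z ^ \<zeta> 0) \<xi>) \<longlongrightarrow> genfun \<Lambda> N c r \<xi> z) at_top"
    unfolding eq by (rule l)
qed


context
  assumes cons: "\<forall>f. \<forall>\<xi>\<in>Omega_star_all \<Lambda> N. genLabs \<Lambda> N c r (opA N f) \<xi> = opA N (genLabs \<Lambda> N c r f) \<xi>"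
begin

lemma Qpow_opA: "\<zeta> \<in> SS p \<Longrightarrow> (Q ^^ k) (opA N f) \<zeta> = opA N ((Q ^^ k) f) \<zeta>"
proof (induction k arbitrary: \<zeta>)
  case (Suc k)
  have "Q ((Q ^^ k) (opA N f)) \<zeta> = Q (opA N ((Q ^^ k) f)) \<zeta>"
    by (rule Q_local[OF Suc.prems], rule Suc.IH)
  also have "\<dots> = opA N (Q ((Q ^^ k) f)) \<zeta>"
    using cons Suc.prems by (auto simp: Omega_star_all_def)
  finally show ?case by simp
qed simp

lemma SG_opA: assumes h: "\<eta> \<in> SS n"
  shows "semigroup \<Lambda> N c r t (opA N f) \<eta> = (\<Sum>x\<in>sites_star N. real (\<eta> x) * semigroup \<Lambda> N c r t f (removeP x \<eta>))"
proof -
  have sm: "summable (\<lambda>k. real (\<eta> x) * (t^k / fact k * (Q ^^ k) f (removeP x \<eta>)))" if x: "x \<in> sites_star N" for x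
  proof (cases "\<eta> x = 0")
    case False
    then have "removeP x \<eta> \<in> SS (n - 1)" using remove_in[OF h x] by simp
    thus ?thesis by (intro summable_mult SG_summable)
  qed simp
  have "semigroup \<Lambda> N c r t (opA N f) \<eta> = (\<Sum>k. \<Sum>x\<in>sites_star N. real (\<eta> x) * (t^k / fact k * (Q ^^ k) f (removeP x \<eta>)))"
    unfolding semigroup_def Qpow_opA[OF h] opA_def by (simp add: sum_distrib_left algebra_simps)
  also have "\<dots> = (\<Sum>x\<in>sites_star N. \<Sum>k. real (\<eta> x) * (t^k / fact k * (Q ^^ k) f (removeP x \<eta>)))"
    by (rule suminf_sum) (use sm in auto)
  also have "\<dots> = (\<Sum>x\<in>sites_star N. real (\<eta> x) * semigroup \<Lambda> N c r t f (removeP x \<eta>))"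
  proof (rule sum.cong[OF refl])
    fix x assume x: "x \<in> sites_star N"
    show "(\<Sum>k. real (\<eta> x) * (t^k / fact k * (Q ^^ k) f (removeP x \<eta>))) = real (\<eta> x) * semigroup \<Lambda> N c r t f (removeP x \<eta>)"
    proof (cases "\<eta> x = 0")
      case False
      then have "removeP x \<eta> \<in> SS (n - 1)" using remove_in[OF h x] by simp
      thus ?thesis unfolding semigroup_def by (rule suminf_mult[OF SG_summable])
    qed simp
  qed
  finally show ?thesis .
qed

lemma opA_pow: assumes h: "\<zeta> \<in> SS n"
  shows "opA N (\<lambda>\<xi>. z ^ \<xi> 0) \<zeta> = real (\<zeta> 0) * z ^ (\<zeta> 0 - 1) + (real n - real (\<zeta> 0)) * z ^ \<zeta> 0"
proof -
  have fin: "finite (sites_star N)" and z0: "0 \<in> sites_star N" by (auto simp: sites_star_def)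
  have "opA N (\<lambda>\<xi>. z ^ \<xi> 0) \<zeta> = real (\<zeta> 0) * z ^ (\<zeta> 0 - 1) + (\<Sum>x\<in>sites_star N - {0}. real (\<zeta> x) * z ^ \<zeta> 0)"
  proof -
    have "(\<Sum>x\<in>sites_star N - {0}. real (\<zeta> x) * z ^ removeP x \<zeta> 0) = (\<Sum>x\<in>sites_star N - {0}. real (\<zeta> x) * z ^ \<zeta> 0)"
      by (rule sum.cong) (auto simp: removeP_def)
    thus ?thesis unfolding opA_def sum.remove[OF fin z0] by (simp add: removeP_def)
  qed
  also have "(\<Sum>x\<in>sites_star N - {0}. real (\<zeta> x) * z ^ \<zeta> 0) = real (\<Sum>x\<in>sites_star N - {0}. \<zeta> x) * z ^ \<zeta> 0"
    by (simp add: sum_distrib_right)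
  also have "(\<Sum>x\<in>sites_star N - {0}. \<zeta> x) = n - \<zeta> 0"
    using h sum.remove[OF fin z0, of \<zeta>] by (auto simp: Omega_star_def nparticles_def)
  also have "real (n - \<zeta> 0) = real n - real (\<zeta> 0)" using SS_le[OF h] by simp
  finally show ?thesis .
qed

lemma ODE_coeffs: assumes h: "\<eta> \<in> SS n"
  shows "(\<Sum>x\<in>sites_star N. real (\<eta> x) * genfun \<Lambda> N c r (removeP x \<eta>) z)
     = (\<Sum>k\<le>n. (real k * z ^ (k - 1) + (real n - real k) * z ^ k) * Lh \<eta> k)"
proof -
  let ?f = "\<lambda>\<xi>. z ^ \<xi> 0"
  have l1: "((\<lambda>t. semigroup \<Lambda> N c r t (opA N ?f) \<eta>) \<longlongrightarrow> (\<Sum>x\<in>sites_star N. real (\<eta> x) * genfun \<Lambda> N c r (removeP x \<eta>) z)) at_top"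
    unfolding SG_opA[OF h]
  proof (intro tendsto_sum)
    fix x assume x: "x \<in> sites_star N"
    show "((\<lambda>t. real (\<eta> x) * semigroup \<Lambda> N c r t ?f (removeP x \<eta>)) \<longlongrightarrow> real (\<eta> x) * genfun \<Lambda> N c r (removeP x \<eta>) z) at_top"
    proof (cases "\<eta> x = 0")
      case False
      then have "removeP x \<eta> \<in> SS (n - 1)" using remove_in[OF h x] by simp
      thus ?thesis by (intro tendsto_mult tendsto_const genfun_lim(1))
    qed simp
  qed
  have eq: "semigroup \<Lambda> N c r t (opA N ?f) \<eta> = semigroup \<Lambda> N c r t (\<lambda>\<zeta>. (\<lambda>k. real k * z ^ (k - 1) + (real n - real k) * z ^ k) (\<zeta> 0)) \<eta>" for t
    by (rule SG_local[OF h]) (simp add: opA_pow)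
  have l2: "((\<lambda>t. semigroup \<Lambda> N c r t (opA N ?f) \<eta>) \<longlongrightarrow> (\<Sum>k\<le>n. (real k * z ^ (k - 1) + (real n - real k) * z ^ k) * Lh \<eta> k)) at_top"
    unfolding eq by (rule conv_phi[OF h])
  show ?thesis using tendsto_unique[OF _ l1 l2] by simp
qed

end

end

lemma key_frac: "(p::real) > 0 \<Longrightarrow> q > 0 \<Longrightarrow> (d*(p*q) - g*(x*q*(-1)))/((p*q)*(p*q)) = (p*d + x*g)/(p*(p*q))"
  by (simp add: field_simps power2_eq_square)

lemma integral_formula:
  fixes G D :: "real \<Rightarrow> real" and H :: "'i \<Rightarrow> real \<Rightarrow> real" and w :: "'i \<Rightarrow> real" and n :: nat
  assumes fin: "finite I" and deriv: "\<And>u. (G has_real_derivative D u) (at u)"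
    and ode: "\<And>u. 0 \<le> u \<Longrightarrow> (1 - u) * D u + real n * G u = (\<Sum>i\<in>I. w i * H i u)"
    and cont: "\<And>i. i \<in> I \<Longrightarrow> w i \<noteq> 0 \<Longrightarrow> continuous_on {0..z} (H i)"
    and z: "0 \<le> z" "z < 1"
  shows "G z = (1 - z) ^ n * G 0 + (1 - z) ^ n * (\<Sum>i\<in>I. w i * integral {0..z} (\<lambda>u. H i u / (1 - u) ^ (n + 1)))"
proof -
  define F where "F u = G u / (1 - u) ^ n" for u :: real
  define F' where "F' u = (\<Sum>i\<in>I. w i * (H i u / (1 - u) ^ (n + 1)))" for u :: real
  have dF: "(F has_vector_derivative F' u) (at u within {0..z})" if u: "u \<in> {0..z}" for u
  proof -
    have p: "1 - u > 0" using u z by auto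
    have d1: "((\<lambda>u. (1 - u) ^ n) has_real_derivative (real n * (1 - u) ^ (n - 1) * (-1))) (at u)"
      by (rule derivative_eq_intros refl)+ simp
    have d2: "(F has_real_derivative (D u * (1 - u) ^ n - G u * (real n * (1 - u) ^ (n - 1) * (-1))) / ((1 - u) ^ n * (1 - u) ^ n)) (at u)"
      unfolding F_def by (rule DERIV_divide[OF deriv d1]) (use p in simp)
    have eq: "(D u * (1 - u) ^ n - G u * (real n * (1 - u) ^ (n - 1) * (-1))) / ((1 - u) ^ n * (1 - u) ^ n)
        = ((1 - u) * D u + real n * G u) / (1 - u) ^ (n + 1)"
    proof (cases n)
      case 0 thus ?thesis using p by simp
    next
      case (Suc k)
      have pk: "(1 - u) ^ k > 0" using p by simp
      have e1: "(1-u)^n = (1-u) * (1-u)^k" "(1-u)^(n-1) = (1-u)^k" "(1-u)^(n+1) = (1-u)*((1-u)*(1-u)^k)"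
        using Suc by simp_all
      show ?thesis unfolding e1 by (rule key_frac[OF p pk])
    qed
    have e: "((1 - u) * D u + real n * G u) / (1 - u) ^ (n + 1) = F' u"
    proof -
      have u0: "0 \<le> u" using u by simp
      show ?thesis unfolding ode[OF u0] F'_def sum_divide_distrib by (simp add: mult.assoc)
    qed
    have "(F has_real_derivative F' u) (at u)" using d2 unfolding eq e .
    then have "(F has_vector_derivative F' u) (at u)" by (simp only: has_real_derivative_iff_has_vector_derivative)
    thus ?thesis by (rule has_vector_derivative_at_within)
  qed
  have I1: "(F' has_integral F z - F 0) {0..z}"
    by (rule fundamental_theorem_of_calculus[OF z(1) dF])
  have I2: "(F' has_integral (\<Sum>i\<in>I. w i * integral {0..z} (\<lambda>u. H i u / (1 - u) ^ (n + 1)))) {0..z}"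
    unfolding F'_def
  proof (rule has_integral_sum[OF fin])
    fix i assume i: "i \<in> I"
    show "((\<lambda>u. w i * (H i u / (1 - u) ^ (n + 1))) has_integral w i * integral {0..z} (\<lambda>u. H i u / (1 - u) ^ (n + 1))) {0..z}"
    proof (cases "w i = 0")
      case True thus ?thesis by simp
    next
      case False
      have "continuous_on {0..z} (\<lambda>u. H i u / (1 - u) ^ (n + 1))"
        using z cont[OF i False] by (intro continuous_intros) auto
      then have "(\<lambda>u. H i u / (1 - u) ^ (n + 1)) integrable_on {0..z}"
        by (rule integrable_continuous_interval)
      thus ?thesis by (intro has_integral_mult_right integrable_integral)
    qed
  qed
  have FF: "F z - F 0 = (\<Sum>i\<in>I. w i * integral {0..z} (\<lambda>u. H i u / (1 - u) ^ (n + 1)))"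
    by (rule has_integral_unique[OF I1 I2])
  have pz: "(1 - z) ^ n > 0" using z by simp
  have "G z = (1 - z) ^ n * (F z - F 0) + (1 - z) ^ n * G 0"
    unfolding F_def using pz z by (simp add: field_simps)
  thus ?thesis unfolding FF by (simp add: algebra_simps)
qed

theorem proposition5p8:
  fixes \<Lambda> :: "nat set" and N n :: nat
    and c :: "config \<Rightarrow> config \<Rightarrow> real" and r :: "nat \<Rightarrow> nat \<Rightarrow> real"
    and \<eta> :: config
  assumes Lambda_down: "\<forall>a\<in>\<Lambda>. \<forall>b\<le>a. b \<in> \<Lambda>"
    and c_nonneg: "\<forall>\<zeta>0 \<zeta>. c \<zeta>0 \<zeta> \<ge> 0"
    and r_nonneg: "\<forall>i\<in>sites_V N. \<forall>j\<in>sites_abs N. r i j \<ge> 0"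
    and consistent: "\<forall>f. \<forall>\<xi>\<in>Omega_star_all \<Lambda> N.
        genLabs \<Lambda> N c r (opA N f) \<xi> = opA N (genLabs \<Lambda> N c r f) \<xi>"
    and eta: "\<eta> \<in> Omega_star \<Lambda> N n"
  shows "(\<forall>z::real. z \<ge> 0 \<longrightarrow>
            (\<exists>D. ((\<lambda>u. genfun \<Lambda> N c r \<eta> u) has_real_derivative D) (at z within {0..})
              \<and> (1 - z) * D + real n * genfun \<Lambda> N c r \<eta> z
                 = (\<Sum>i\<in>sites_star N. real (\<eta> i) * genfun \<Lambda> N c r (removeP i \<eta>) z)))
       \<and> (\<forall>z::real. 0 \<le> z \<and> z < 1 \<longrightarrow>
            genfun \<Lambda> N c r \<eta> z
              = (1 - z) ^ n * genfun \<Lambda> N c r \<eta> 0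
                + (1 - z) ^ n * (\<Sum>i\<in>sites_star N. real (\<eta> i) *
                    integral {0..z} (\<lambda>u. genfun \<Lambda> N c r (removeP i \<eta>) u / (1 - u) ^ (n + 1))))"
proof -
  interpret absproc \<Lambda> N c r by unfold_locales (use Lambda_down c_nonneg r_nonneg in auto)
  define G where "G = genfun \<Lambda> N c r \<eta>"
  define L where "L = Lh \<eta>"
  define D where "D z = (\<Sum>k\<le>n. (real k * z ^ (k - 1)) * L k)" for z :: real
  define RHS where "RHS z = (\<Sum>i\<in>sites_star N. real (\<eta> i) * genfun \<Lambda> N c r (removeP i \<eta>) z)" for z
  have Geq: "G = (\<lambda>z. \<Sum>k\<le>n. z ^ k * L k)"
    unfolding G_def L_def by (intro ext) (rule genfun_lim(2)[OF eta])
  have deriv: "(G has_real_derivative D z) (at z)" for z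
    unfolding Geq D_def by (intro DERIV_sum) (auto intro!: derivative_eq_intros)
  have ode: "(1 - z) * D z + real n * G z = RHS z" for z
  proof -
    have "(1 - z) * D z + real n * G z = (\<Sum>k\<le>n. (real k * z ^ (k - 1) + (real n - real k) * z ^ k) * L k)"
      unfolding D_def Geq sum_distrib_left sum.distrib[symmetric]
    proof (rule sum.cong[OF refl])
      fix k
      show "(1 - z) * (real k * z ^ (k - 1) * L k) + real n * (z ^ k * L k) = (real k * z ^ (k - 1) + (real n - real k) * z ^ k) * L k"
      proof (cases k)
        case (Suc j) thus ?thesis by (simp add: algebra_simps)
      qed simp
    qed
    also have "\<dots> = RHS z" unfolding RHS_def L_def by (rule ODE_coeffs[OF consistent eta, symmetric])
    finally show ?thesis .
  qed
  have part1: "\<forall>z::real. z \<ge> 0 \<longrightarrow>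
            (\<exists>D. ((\<lambda>u. genfun \<Lambda> N c r \<eta> u) has_real_derivative D) (at z within {0..})
              \<and> (1 - z) * D + real n * genfun \<Lambda> N c r \<eta> z = RHS z)"
  proof (intro allI impI)
    fix z :: real assume "z \<ge> 0"
    show "\<exists>D. ((\<lambda>u. genfun \<Lambda> N c r \<eta> u) has_real_derivative D) (at z within {0..})
              \<and> (1 - z) * D + real n * genfun \<Lambda> N c r \<eta> z = RHS z"
      using has_field_derivative_at_within[OF deriv[of z]] ode[of z] unfolding G_def
      by (intro exI[of _ "D z"]) simp
  qed
  have part2: "genfun \<Lambda> N c r \<eta> z
              = (1 - z) ^ n * genfun \<Lambda> N c r \<eta> 0
                + (1 - z) ^ n * (\<Sum>i\<in>sites_star N. real (\<eta> i) *
                    integral {0..z} (\<lambda>u. genfun \<Lambda> N c r (removeP i \<eta>) u / (1 - u) ^ (n + 1)))"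
    if z: "0 \<le> z" "z < 1" for z :: real
  proof -
    have cont: "continuous_on {0..z} (genfun \<Lambda> N c r (removeP i \<eta>))"
      if i: "i \<in> sites_star N" and ne: "real (\<eta> i) \<noteq> 0" for i
    proof -
      have ri: "removeP i \<eta> \<in> SS (n - 1)" using remove_in[OF eta i] ne by simp
      have Gieq: "genfun \<Lambda> N c r (removeP i \<eta>) = (\<lambda>u. \<Sum>k\<le>n - 1. u ^ k * Lh (removeP i \<eta>) k)"
        by (intro ext) (rule genfun_lim(2)[OF ri])
      show ?thesis unfolding Gieq by (intro continuous_intros)
    qed
    have ode': "(1 - u) * D u + real n * G u = (\<Sum>i\<in>sites_star N. real (\<eta> i) * genfun \<Lambda> N c r (removeP i \<eta>) u)"
      if "0 \<le> u" for u using ode[of u] unfolding RHS_def .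
    have "G z = (1 - z) ^ n * G 0 + (1 - z) ^ n * (\<Sum>i\<in>sites_star N. real (\<eta> i) *
                    integral {0..z} (\<lambda>u. genfun \<Lambda> N c r (removeP i \<eta>) u / (1 - u) ^ (n + 1)))"
      by (rule integral_formula[where H="\<lambda>i. genfun \<Lambda> N c r (removeP i \<eta>)", OF _ deriv ode' cont z])
         (simp add: sites_star_def)
    thus ?thesis unfolding G_def .
  qed
  show ?thesis
  proof (rule conjI)
    show "\<forall>z::real. z \<ge> 0 \<longrightarrow>
            (\<exists>D. ((\<lambda>u. genfun \<Lambda> N c r \<eta> u) has_real_derivative D) (at z within {0..})
              \<and> (1 - z) * D + real n * genfun \<Lambda> N c r \<eta> z
                 = (\<Sum>i\<in>sites_star N. real (\<eta> i) * genfun \<Lambda> N c r (removeP i \<eta>) z))"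
      using part1 unfolding RHS_def .
    show "\<forall>z::real. 0 \<le> z \<and> z < 1 \<longrightarrow>
            genfun \<Lambda> N c r \<eta> z
              = (1 - z) ^ n * genfun \<Lambda> N c r \<eta> 0
                + (1 - z) ^ n * (\<Sum>i\<in>sites_star N. real (\<eta> i) *
                    integral {0..z} (\<lambda>u. genfun \<Lambda> N c r (removeP i \<eta>) u / (1 - u) ^ (n + 1)))"
    proof (intro allI impI)
      fix z :: real assume "0 \<le> z \<and> z < 1"
      thus "genfun \<Lambda> N c r \<eta> z
              = (1 - z) ^ n * genfun \<Lambda> N c r \<eta> 0
                + (1 - z) ^ n * (\<Sum>i\<in>sites_star N. real (\<eta> i) *
                    integral {0..z} (\<lambda>u. genfun \<Lambda> N c r (removeP i \<eta>) u / (1 - u) ^ (n + 1)))"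
        using part2 by blast
    qed
  qed
qed

end
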